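(* Let $\tilde L$ be a minimum-size counterexample. Then the least element $0_{\tilde L}$ is meet-reducible in $\tilde L$, i.e. it is lower covered by (has) at least two atoms.
   Context: For a poset $P$, $x$ upper covers $y$ if $y<x$ with nothing strictly between. Join-irreducible: upper covers exactly one element; meet-reducible: lower covers more than one element; an atom is an element upper covering the least element. For $x\in P$, ${\uparrow}x=\{y: x\le y\}$. A counterexample is a finite lattice $L$ with $|L|>1$ in which every join-irreducible $j$ satisfies $|{\uparrow}j|>|L|/2$; a minimum-size counterexample is a counterexample $\tilde L$ such that no counterexample has fewer elements. *)

theory Defs
  imports Main
begin

text \<open>A finite poset/lattice is represented by a carrier set S and an order relation le
  (le x y meaning x is at most y), only relevant on S.\<close>

definition is_poset :: "'a set \<Rightarrow> ('a \<Rightarrow> 'a \<Rightarrow> bool) \<Rightarrow> bool" where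
  "is_poset S le \<longleftrightarrow>
     (\<forall>x\<in>S. le x x) \<and>
     (\<forall>x\<in>S. \<forall>y\<in>S. le x y \<and> le y x \<longrightarrow> x = y) \<and>
     (\<forall>x\<in>S. \<forall>y\<in>S. \<forall>z\<in>S. le x y \<and> le y z \<longrightarrow> le x z)"

definition is_lattice :: "'a set \<Rightarrow> ('a \<Rightarrow> 'a \<Rightarrow> bool) \<Rightarrow> bool" where
  "is_lattice S le \<longleftrightarrow> is_poset S le \<and>
     (\<forall>x\<in>S. \<forall>y\<in>S. \<exists>s\<in>S. le x s \<and> le y s \<and> (\<forall>w\<in>S. le x w \<and> le y w \<longrightarrow> le s w)) \<and>
     (\<forall>x\<in>S. \<forall>y\<in>S. \<exists>i\<in>S. le i x \<and> le i y \<and> (\<forall>w\<in>S. le w x \<and> le w y \<longrightarrow> le w i))"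

definition finite_lattice :: "'a set \<Rightarrow> ('a \<Rightarrow> 'a \<Rightarrow> bool) \<Rightarrow> bool" where
  "finite_lattice S le \<longleftrightarrow> finite S \<and> is_lattice S le"

definition upper_covers :: "'a set \<Rightarrow> ('a \<Rightarrow> 'a \<Rightarrow> bool) \<Rightarrow> 'a \<Rightarrow> 'a \<Rightarrow> bool" where
  "upper_covers S le x y \<longleftrightarrow> x \<in> S \<and> y \<in> S \<and> le y x \<and> y \<noteq> x \<and>
     \<not> (\<exists>z\<in>S. le y z \<and> z \<noteq> y \<and> le z x \<and> z \<noteq> x)"

definition join_irreducible :: "'a set \<Rightarrow> ('a \<Rightarrow> 'a \<Rightarrow> bool) \<Rightarrow> 'a \<Rightarrow> bool" where
  "join_irreducible S le j \<longleftrightarrow> j \<in> S \<and> card {y \<in> S. upper_covers S le j y} = 1"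

definition meet_reducible :: "'a set \<Rightarrow> ('a \<Rightarrow> 'a \<Rightarrow> bool) \<Rightarrow> 'a \<Rightarrow> bool" where
  "meet_reducible S le x \<longleftrightarrow> x \<in> S \<and> card {y \<in> S. upper_covers S le y x} > 1"

definition up_set :: "'a set \<Rightarrow> ('a \<Rightarrow> 'a \<Rightarrow> bool) \<Rightarrow> 'a \<Rightarrow> 'a set" where
  "up_set S le x = {y \<in> S. le x y}"

definition is_least :: "'a set \<Rightarrow> ('a \<Rightarrow> 'a \<Rightarrow> bool) \<Rightarrow> 'a \<Rightarrow> bool" where
  "is_least S le z \<longleftrightarrow> z \<in> S \<and> (\<forall>x\<in>S. le z x)"

definition counterexample :: "'a set \<Rightarrow> ('a \<Rightarrow> 'a \<Rightarrow> bool) \<Rightarrow> bool" where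
  "counterexample S le \<longleftrightarrow> finite_lattice S le \<and> card S > 1 \<and>
     (\<forall>j. join_irreducible S le j \<longrightarrow> 2 * card (up_set S le j) > card S)"

text \<open>Minimum-size counterexample: no counterexample has fewer elements. Every finite
  lattice is isomorphic to one carried by a subset of nat, so competitors range over
  lattices on nat.\<close>
definition min_counterexample :: "'a set \<Rightarrow> ('a \<Rightarrow> 'a \<Rightarrow> bool) \<Rightarrow> bool" where
  "min_counterexample S le \<longleftrightarrow> counterexample S le \<and>
     (\<forall>(S' :: nat set) le'. counterexample S' le' \<longrightarrow> card S \<le> card S')"

end

theory Submission
  imports Defs
begin

lemma tr_ball:
  assumes "bij_betw g B A"
  shows "(\<forall>x\<in>B. P (g x)) \<longleftrightarrow> (\<forall>x\<in>A. P x)"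
  using assms unfolding bij_betw_def by auto

lemma tr_bex:
  assumes "bij_betw g B A"
  shows "(\<exists>x\<in>B. P (g x)) \<longleftrightarrow> (\<exists>x\<in>A. P x)"
  using assms unfolding bij_betw_def by auto

lemma tr_uc:
  assumes b: "bij_betw g B A" and x: "x \<in> B" and y: "y \<in> B"
  shows "upper_covers B (\<lambda>u v. le (g u) (g v)) x y \<longleftrightarrow> upper_covers A le (g x) (g y)"
proof -
  have inj: "inj_on g B" using b bij_betw_def by blast
  have gx: "g x \<in> A" "g y \<in> A" using b x y bij_betwE by blast+
  have ne: "(g y \<noteq> g x) \<longleftrightarrow> (y \<noteq> x)" using inj x y inj_on_eq_iff by metis
  have ex: "(\<exists>w\<in>B. le (g y) (g w) \<and> w \<noteq> y \<and> le (g w) (g x) \<and> w \<noteq> x)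
     \<longleftrightarrow> (\<exists>w\<in>B. le (g y) (g w) \<and> g w \<noteq> g y \<and> le (g w) (g x) \<and> g w \<noteq> g x)"
    using inj x y by (metis inj_on_eq_iff)
  also have "\<dots> \<longleftrightarrow> (\<exists>w\<in>A. le (g y) w \<and> w \<noteq> g y \<and> le w (g x) \<and> w \<noteq> g x)"
    using tr_bex[OF b, of "\<lambda>w. le (g y) w \<and> w \<noteq> g y \<and> le w (g x) \<and> w \<noteq> g x"] by simp
  finally show ?thesis unfolding upper_covers_def using x y gx ne by auto
qed

lemma tr_card_uc:
  assumes b: "bij_betw g B A" and x: "x \<in> B"
  shows "card {y\<in>B. upper_covers B (\<lambda>u v. le (g u) (g v)) x y} = card {y\<in>A. upper_covers A le (g x) y}"
proof -
  define T where "T = {y\<in>B. upper_covers B (\<lambda>u v. le (g u) (g v)) x y}"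
  have inj: "inj_on g B" using b unfolding bij_betw_def by blast
  have gB: "g ` B = A" using b unfolding bij_betw_def by blast
  have "{y\<in>A. upper_covers A le (g x) y} = g ` T"
  proof (intro set_eqI iffI)
    fix y assume "y \<in> {y\<in>A. upper_covers A le (g x) y}"
    then have yA: "y \<in> A" and u: "upper_covers A le (g x) y" by auto
    obtain y' where y': "y' \<in> B" "y = g y'" using gB yA by blast
    have "y' \<in> T" unfolding T_def using tr_uc[OF b x y'(1)] u y' by simp
    then show "y \<in> g ` T" using y'(2) by blast
  next
    fix y assume "y \<in> g ` T"
    then obtain y' where y': "y' \<in> T" "y = g y'" by blast
    then have y'B: "y' \<in> B" and u: "upper_covers B (\<lambda>u v. le (g u) (g v)) x y'" unfolding T_def by auto
    have "g y' \<in> A" using gB y'B by blast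
    then show "y \<in> {y\<in>A. upper_covers A le (g x) y}" using tr_uc[OF b x y'B] u y'(2) by simp
  qed
  moreover have "inj_on g T" using inj by (rule inj_on_subset) (auto simp: T_def)
  ultimately show ?thesis unfolding T_def[symmetric] by (simp add: card_image)
qed

lemma tr_card_up:
  assumes b: "bij_betw g B A" and x: "x \<in> B"
  shows "card (up_set B (\<lambda>u v. le (g u) (g v)) x) = card (up_set A le (g x))"
proof -
  have inj: "inj_on g B" using b bij_betw_def by blast
  have "up_set A le (g x) = g ` up_set B (\<lambda>u v. le (g u) (g v)) x"
    using b unfolding up_set_def bij_betw_def by auto
  moreover have "inj_on g (up_set B (\<lambda>u v. le (g u) (g v)) x)"
    using inj by (rule inj_on_subset) (auto simp: up_set_def)
  ultimately show ?thesis using card_image by metis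
qed

lemma tr_counter:
  assumes b: "bij_betw g B A" and c: "counterexample A le"
  shows "counterexample B (\<lambda>u v. le (g u) (g v))"
proof -
  have finA: "finite A" using c unfolding counterexample_def finite_lattice_def by blast
  have fin: "finite B" using bij_betw_finite[OF b] finA by simp
  have cardB: "card B = card A" using b by (rule bij_betw_same_card)
  have lat: "is_lattice A le" using c unfolding counterexample_def finite_lattice_def by blast
  have gB: "g ` B = A" using b unfolding bij_betw_def by blast
  have gA: "\<And>x. x \<in> B \<Longrightarrow> g x \<in> A" using gB by blast
  have inj: "\<And>x y. x \<in> B \<Longrightarrow> y \<in> B \<Longrightarrow> g x = g y \<Longrightarrow> x = y"
    using b unfolding bij_betw_def inj_on_def by blast
  have joinA: "\<forall>x\<in>A. \<forall>y\<in>A. \<exists>s\<in>A. le x s \<and> le y s \<and> (\<forall>w\<in>A. le x w \<and> le y w \<longrightarrow> le s w)"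
    using lat unfolding is_lattice_def by (elim conjE)
  have meetA: "\<forall>x\<in>A. \<forall>y\<in>A. \<exists>i\<in>A. le i x \<and> le i y \<and> (\<forall>w\<in>A. le w x \<and> le w y \<longrightarrow> le w i)"
    using lat unfolding is_lattice_def by (elim conjE)
  have pos: "is_poset B (\<lambda>u v. le (g u) (g v))"
  proof -
    have p: "is_poset A le" using lat unfolding is_lattice_def by blast
    show ?thesis unfolding is_poset_def
    proof (intro conjI ballI impI)
      fix x assume "x \<in> B" then show "le (g x) (g x)" using p gA unfolding is_poset_def by blast
    next
      fix x y assume "x \<in> B" "y \<in> B" "le (g x) (g y) \<and> le (g y) (g x)"
      then have "g x = g y" using p gA unfolding is_poset_def by blast
      then show "x = y" using inj \<open>x \<in> B\<close> \<open>y \<in> B\<close> by blast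
    next
      fix x y w assume "x \<in> B" "y \<in> B" "w \<in> B" "le (g x) (g y) \<and> le (g y) (g w)"
      then show "le (g x) (g w)" using p gA unfolding is_poset_def by blast
    qed
  qed
  have j: "\<forall>x\<in>B. \<forall>y\<in>B. \<exists>s\<in>B. le (g x) (g s) \<and> le (g y) (g s) \<and> (\<forall>w\<in>B. le (g x) (g w) \<and> le (g y) (g w) \<longrightarrow> le (g s) (g w))"
  proof (intro ballI)
    fix x y assume "x \<in> B" "y \<in> B"
    then obtain s where sA: "s\<in>A" and s: "le (g x) s" "le (g y) s" "\<forall>w\<in>A. le (g x) w \<and> le (g y) w \<longrightarrow> le s w"
      using joinA gA by blast
    obtain s' where s'B: "s' \<in> B" and gs: "g s' = s" using gB sA by blast
    show "\<exists>s\<in>B. le (g x) (g s) \<and> le (g y) (g s) \<and> (\<forall>w\<in>B. le (g x) (g w) \<and> le (g y) (g w) \<longrightarrow> le (g s) (g w))"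
    proof (intro bexI[OF _ s'B] conjI ballI impI)
      show "le (g x) (g s')" "le (g y) (g s')" using s gs by auto
      fix w assume "w \<in> B" "le (g x) (g w) \<and> le (g y) (g w)"
      then show "le (g s') (g w)" using s(3) gA[of w] gs by blast
    qed
  qed
  have m: "\<forall>x\<in>B. \<forall>y\<in>B. \<exists>s\<in>B. le (g s) (g x) \<and> le (g s) (g y) \<and> (\<forall>w\<in>B. le (g w) (g x) \<and> le (g w) (g y) \<longrightarrow> le (g w) (g s))"
  proof (intro ballI)
    fix x y assume "x \<in> B" "y \<in> B"
    then obtain s where sA: "s\<in>A" and s: "le s (g x)" "le s (g y)" "\<forall>w\<in>A. le w (g x) \<and> le w (g y) \<longrightarrow> le w s"
      using meetA gA by blast
    obtain s' where s'B: "s' \<in> B" and gs: "g s' = s" using gB sA by blast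
    show "\<exists>s\<in>B. le (g s) (g x) \<and> le (g s) (g y) \<and> (\<forall>w\<in>B. le (g w) (g x) \<and> le (g w) (g y) \<longrightarrow> le (g w) (g s))"
    proof (intro bexI[OF _ s'B] conjI ballI impI)
      show "le (g s') (g x)" "le (g s') (g y)" using s gs by auto
      fix w assume "w \<in> B" "le (g w) (g x) \<and> le (g w) (g y)"
      then show "le (g w) (g s')" using s(3) gA[of w] gs by blast
    qed
  qed
  have ji: "\<forall>x. join_irreducible B (\<lambda>u v. le (g u) (g v)) x \<longrightarrow> 2 * card (up_set B (\<lambda>u v. le (g u) (g v)) x) > card B"
  proof (intro allI impI)
    fix x assume "join_irreducible B (\<lambda>u v. le (g u) (g v)) x"
    then have xB: "x \<in> B" and "card {y\<in>B. upper_covers B (\<lambda>u v. le (g u) (g v)) x y} = 1"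
      unfolding join_irreducible_def by auto
    then have "join_irreducible A le (g x)" using tr_card_uc[OF b xB] gA[OF xB] unfolding join_irreducible_def by simp
    then have "2 * card (up_set A le (g x)) > card A" using c unfolding counterexample_def by blast
    then show "2 * card (up_set B (\<lambda>u v. le (g u) (g v)) x) > card B"
      using tr_card_up[OF b xB] cardB by simp
  qed
  have c1: "card B > 1" using c cardB unfolding counterexample_def by simp
  have "is_lattice B (\<lambda>u v. le (g u) (g v))" unfolding is_lattice_def using pos j m by blast
  then show ?thesis unfolding counterexample_def finite_lattice_def using fin c1 ji by blast
qed

theorem corollary2p2:
  fixes S :: "'a set" and le :: "'a \<Rightarrow> 'a \<Rightarrow> bool"
  assumes "min_counterexample S le"
    and "is_least S le z"
  shows "meet_reducible S le z"
proof (rule ccontr)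
  assume nmr: "\<not> meet_reducible S le z"
  have ce: "counterexample S le" and mn: "\<And>(S'::nat set) le'. counterexample S' le' \<Longrightarrow> card S \<le> card S'"
    using assms(1) unfolding min_counterexample_def by auto
  have fin: "finite S" and lat: "is_lattice S le" and c1: "card S > 1"
    using ce unfolding counterexample_def finite_lattice_def by auto
  have pos: "is_poset S le" using lat unfolding is_lattice_def by blast
  have joinS: "\<forall>x\<in>S. \<forall>y\<in>S. \<exists>s\<in>S. le x s \<and> le y s \<and> (\<forall>w\<in>S. le x w \<and> le y w \<longrightarrow> le s w)"
    using lat unfolding is_lattice_def by (elim conjE)
  have meetS: "\<forall>x\<in>S. \<forall>y\<in>S. \<exists>i\<in>S. le i x \<and> le i y \<and> (\<forall>w\<in>S. le w x \<and> le w y \<longrightarrow> le w i)"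
    using lat unfolding is_lattice_def by (elim conjE)
  have rfl: "\<And>x. x \<in> S \<Longrightarrow> le x x" using pos unfolding is_poset_def by blast
  have ant: "\<And>x y. x \<in> S \<Longrightarrow> y \<in> S \<Longrightarrow> le x y \<Longrightarrow> le y x \<Longrightarrow> x = y" using pos unfolding is_poset_def by blast
  have trn: "\<And>x y w. x \<in> S \<Longrightarrow> y \<in> S \<Longrightarrow> w \<in> S \<Longrightarrow> le x y \<Longrightarrow> le y w \<Longrightarrow> le x w"
    using pos unfolding is_poset_def by blast
  have zS: "z \<in> S" and zl: "\<And>x. x \<in> S \<Longrightarrow> le z x" using assms(2) unfolding is_least_def by auto
  define At where "At = {y\<in>S. upper_covers S le y z}"
  have below: "\<exists>b\<in>At. le b x" if xS: "x \<in> S" and xz: "x \<noteq> z" for x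
  proof -
    define C where "C = {y\<in>S. le y x \<and> y \<noteq> z}"
    define f where "f y = card {w\<in>S. le w y}" for y
    have "x \<in> C" using xS xz rfl C_def by auto
    then obtain y where yC: "y \<in> C" and ymin: "\<And>w. w \<in> C \<Longrightarrow> f y \<le> f w"
      using ex_has_least_nat[of "\<lambda>y. y \<in> C" x f] by blast
    have yS: "y \<in> S" and yx: "le y x" and yz: "y \<noteq> z" using yC C_def by auto
    have "upper_covers S le y z"
      unfolding upper_covers_def
    proof (intro conjI)
      show "\<not> (\<exists>w\<in>S. le z w \<and> w \<noteq> z \<and> le w y \<and> w \<noteq> y)"
      proof
        assume "\<exists>w\<in>S. le z w \<and> w \<noteq> z \<and> le w y \<and> w \<noteq> y"
        then obtain w where wS: "w \<in> S" and wz: "w \<noteq> z" and wy: "le w y" and wny: "w \<noteq> y" by blast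
        have "w \<in> C" unfolding C_def using wS wz trn[OF wS yS xS wy yx] by blast
        then have "f y \<le> f w" by (rule ymin)
        moreover have "{u\<in>S. le u w} \<subset> {u\<in>S. le u y}"
        proof
          show "{u\<in>S. le u w} \<subseteq> {u\<in>S. le u y}" by (auto intro: trn[OF _ wS yS _ wy])
          show "{u\<in>S. le u w} \<noteq> {u\<in>S. le u y}"
          proof
            assume "{u\<in>S. le u w} = {u\<in>S. le u y}"
            then have "le y w" using yS rfl by blast
            then show False using ant[OF wS yS wy] wny by blast
          qed
        qed
        then have "f w < f y" unfolding f_def using fin by (simp add: psubset_card_mono)
        ultimately show False by simp
      qed
    next
      show "y \<in> S" by (rule yS)
    next
      show "z \<in> S" by (rule zS)
    next
      show "le z y" by (rule zl[OF yS])
    next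
      show "z \<noteq> y" using yz by simp
    qed
    then have "y \<in> At" unfolding At_def using yS by simp
    then show ?thesis using yx by blast
  qed
  obtain x where xS: "x \<in> S" and xz: "x \<noteq> z"
  proof -
    have "\<not> S \<subseteq> {z}"
    proof
      assume "S \<subseteq> {z}"
      then have "card S \<le> card {z}" using card_mono[of "{z}" S] by simp
      with c1 show False by simp
    qed
    then show ?thesis using that by blast
  qed
  have AtF: "finite At" unfolding At_def using fin by auto
  have "At \<noteq> {}" using below[OF xS xz] by blast
  moreover have "card At \<le> 1" using nmr zS At_def unfolding meet_reducible_def by auto
  ultimately have "card At = 1" using AtF by (simp add: card_gt_0_iff le_antisym Suc_leI)
  then obtain a where Ata: "At = {a}" using card_1_singletonE by blast
  have aS: "a \<in> S" and ucA: "upper_covers S le a z" using Ata At_def by auto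
  have az: "a \<noteq> z" and za: "le z a" using ucA unfolding upper_covers_def by auto
  have ale: "\<And>x. x \<in> S \<Longrightarrow> x \<noteq> z \<Longrightarrow> le a x" using below Ata by blast
  have nza: "\<And>y. y \<in> S \<Longrightarrow> le y z \<Longrightarrow> y = z" using ant[OF _ zS] zl by blast
  have upa: "up_set S le a = S - {z}"
  proof (intro set_eqI iffI)
    fix y assume "y \<in> up_set S le a"
    then have yS: "y \<in> S" and ay: "le a y" unfolding up_set_def by auto
    have "y \<noteq> z"
    proof
      assume "y = z"
      then have "a = z" using ant[OF aS zS] ay za by simp
      then show False using az by simp
    qed
    then show "y \<in> S - {z}" using yS by simp
  next
    fix y assume "y \<in> S - {z}"
    then show "y \<in> up_set S le a" unfolding up_set_def using ale by auto
  qed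
  have "{y\<in>S. upper_covers S le a y} = {z}"
  proof
    show "{z} \<subseteq> {y\<in>S. upper_covers S le a y}" using ucA zS by auto
    show "{y\<in>S. upper_covers S le a y} \<subseteq> {z}"
    proof
      fix y assume "y \<in> {y\<in>S. upper_covers S le a y}"
      then have yS: "y \<in> S" and "le y a" "y \<noteq> a" unfolding upper_covers_def by auto
      then have "y = z" using ale[OF yS] ant[OF yS aS] by blast
      then show "y \<in> {z}" by simp
    qed
  qed
  then have jia: "join_irreducible S le a" unfolding join_irreducible_def using aS by simp
  have cSz: "card (S - {z}) = card S - 1" using fin zS by simp
  have "2 * card (up_set S le a) > card S" using ce jia unfolding counterexample_def by blast
  then have "2 * (card S - 1) > card S" using upa cSz by simp
  then have c3: "card S > 2" by linarith
  define S' where "S' = S - {z}"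
  have S'S: "S' \<subseteq> S" using S'_def by auto
  have ce': "counterexample S' le"
    unfolding counterexample_def finite_lattice_def
  proof (intro conjI allI impI)
    show "finite S'" using fin S'_def by simp
    show "card S' > 1" using cSz c3 S'_def by simp
    show "is_lattice S' le" unfolding is_lattice_def
    proof (intro conjI ballI)
      show "is_poset S' le" using pos S'S unfolding is_poset_def by blast
    next
      fix x y assume xS': "x \<in> S'" and yS': "y \<in> S'"
      then have xS: "x \<in> S" and yS: "y \<in> S" and "x \<noteq> z" using S'_def by auto
      obtain s where sS: "s \<in> S" and s: "le x s \<and> le y s \<and> (\<forall>w\<in>S. le x w \<and> le y w \<longrightarrow> le s w)"
        using joinS xS yS by blast
      have "s \<noteq> z"
      proof
        assume "s = z"
        then have "le x z" using s by simp
        then have "x = z" using nza[OF xS] by simp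
        with \<open>x \<noteq> z\<close> show False by simp
      qed
      then show "\<exists>s\<in>S'. le x s \<and> le y s \<and> (\<forall>w\<in>S'. le x w \<and> le y w \<longrightarrow> le s w)"
        using sS s S'_def by auto
    next
      fix x y assume xS': "x \<in> S'" and yS': "y \<in> S'"
      then have xS: "x \<in> S" and yS: "y \<in> S" and "x \<noteq> z" "y \<noteq> z" using S'_def by auto
      obtain s where sS: "s \<in> S" and s: "le s x \<and> le s y \<and> (\<forall>w\<in>S. le w x \<and> le w y \<longrightarrow> le w s)"
        using meetS xS yS by blast
      have "le a x" "le a y" using ale xS yS \<open>x \<noteq> z\<close> \<open>y \<noteq> z\<close> by auto
      then have "le a s" using s aS by blast
      have "s \<noteq> z"
      proof
        assume "s = z"
        then have "le a z" using \<open>le a s\<close> by simp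
        then show False using nza[OF aS] az by simp
      qed
      then show "\<exists>s\<in>S'. le s x \<and> le s y \<and> (\<forall>w\<in>S'. le w x \<and> le w y \<longrightarrow> le w s)"
        using sS s S'_def by auto
    qed
  next
    fix j assume jj: "join_irreducible S' le j"
    then have jS': "j \<in> S'" and cj: "card {y\<in>S'. upper_covers S' le j y} = 1"
      unfolding join_irreducible_def by auto
    have jS: "j \<in> S" and jz: "j \<noteq> z" using jS' S'_def by auto
    have "j \<noteq> a"
    proof
      assume "j = a"
      have "{y\<in>S'. upper_covers S' le j y} = {}"
      proof (rule equals0I)
        fix y assume "y \<in> {y\<in>S'. upper_covers S' le j y}"
        then have "y \<in> S" "y \<noteq> z" "le y a" "y \<noteq> a" using \<open>j = a\<close> S'_def unfolding upper_covers_def by auto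
        then show False using ale[of y] ant[of y a] aS by simp
      qed
      then show False using cj by (metis card.empty zero_neq_one)
    qed
    have ja: "le a j" using ale[OF jS jz] .
    have eq: "{y\<in>S'. upper_covers S' le j y} = {y\<in>S. upper_covers S le j y}"
    proof (intro set_eqI iffI)
      fix y assume "y \<in> {y\<in>S'. upper_covers S' le j y}"
      then have yS': "y \<in> S'" and u: "upper_covers S' le j y" by auto
      have yS: "y \<in> S" and yz: "y \<noteq> z" using yS' S'_def by auto
      have "upper_covers S le j y" unfolding upper_covers_def
      proof (intro conjI)
        show "\<not> (\<exists>w\<in>S. le y w \<and> w \<noteq> y \<and> le w j \<and> w \<noteq> j)"
        proof
          assume "\<exists>w\<in>S. le y w \<and> w \<noteq> y \<and> le w j \<and> w \<noteq> j"
          then obtain w where "w \<in> S" "le y w" "w \<noteq> y" "le w j" "w \<noteq> j" by blast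
          moreover have "w \<noteq> z"
          proof
            assume "w = z"
            then have "le y z" using \<open>le y w\<close> by simp
            then show False using nza[OF yS] yz by simp
          qed
          then have "w \<in> S'" using \<open>w \<in> S\<close> unfolding S'_def by simp
          with \<open>le y w\<close> \<open>w \<noteq> y\<close> \<open>le w j\<close> \<open>w \<noteq> j\<close> show False using u unfolding upper_covers_def by blast
        qed
      qed (use u yS jS in \<open>auto simp: upper_covers_def\<close>)
      then show "y \<in> {y\<in>S. upper_covers S le j y}" using yS by simp
    next
      fix y assume "y \<in> {y\<in>S. upper_covers S le j y}"
      then have yS: "y \<in> S" and u: "upper_covers S le j y" by auto
      have "y \<noteq> z"
      proof
        assume "y = z"
        then have "\<not> (\<exists>w\<in>S. le z w \<and> w \<noteq> z \<and> le w j \<and> w \<noteq> j)" using u unfolding upper_covers_def by simp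
        then show False using aS az za ja \<open>j \<noteq> a\<close> by blast
      qed
      then have "y \<in> S'" using yS S'_def by simp
      moreover have "upper_covers S' le j y" using u jS' \<open>y \<in> S'\<close> S'S unfolding upper_covers_def by blast
      ultimately show "y \<in> {y\<in>S'. upper_covers S' le j y}" by simp
    qed
    have "join_irreducible S le j" using cj eq jS unfolding join_irreducible_def by simp
    then have "2 * card (up_set S le j) > card S" using ce unfolding counterexample_def by blast
    moreover have "up_set S' le j = up_set S le j"
      unfolding up_set_def S'_def using nza jS jz by blast
    moreover have "card S' < card S" using cSz c3 S'_def by simp
    ultimately show "2 * card (up_set S' le j) > card S'" by simp
  qed
  have finS': "finite S'" using fin S'_def by simp
  obtain h where h: "bij_betw h S' {0..<card S'}" using ex_bij_betw_finite_nat[OF finS'] by blast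
  define g where "g = inv_into S' h"
  have bg: "bij_betw g {0..<card S'} S'" unfolding g_def by (rule bij_betw_inv_into[OF h])
  have "counterexample {0..<card S'} (\<lambda>u v. le (g u) (g v))" using tr_counter[OF bg ce'] .
  then have "card S \<le> card {0..<card S'}" by (rule mn)
  then show False using cSz c3 S'_def by simp
qed

end
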